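(* For every $n\ge 3$ and every Greene–Kleitman chain $C$ in $Q_n$ with $|C|\ge 3$, the chains $f( *C* )$ and $f( *\ell(C)* )$ are connected at their bottom ends in $Q_{n+2}$. Specifically, if $C=u*C'$ with $u\in D$ and $C'$ containing at least two $*$s, then $f( *C* )=0\,u\,1\,C'\,*$ and $f( *\ell(C)* )=0\,u\,1\,\ell(C')\,*$; i.e., the chains $f( *C* )$ and $f( *\ell(C)* )$ differ in exactly two positions.
   Context: $Q_n$ is the hypercube on $\{0,1\}^n$. Let $D$ be the set of bitstrings (including the empty string) with equally many $0$s and $1$s such that every prefix has at least as many $0$s as $1$s. A Greene–Kleitman chain in $Q_n$ is a string of length $n$ over $\{0,1,*\}$ of the form $u_0*u_1*\cdots*u_{h-1}*u_h$ with all $u_j\in D$, representing the path whose vertices are obtained by replacing the $*$s by $i$ ones followed by $h-i$ zeros; $|C|=h$ is its number of $*$s, and its bottom end $b(C)$ is obtained by replacing all $*$s by $0$. For a string $C$ over $\{0,1,*\}$ with at least two $*$s, $f(C)$ (resp. $\ell(C)$) is obtained by replacing the first two (resp. last two) $*$s by $0$ and $1$, respectively. Juxtaposition denotes concatenation. Two chains are connected at their bottom ends if their bottom ends differ in exactly one position. *)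

theory Defs
  imports Main
begin

datatype sym = Zero | One | Star

definition stars :: "sym list \<Rightarrow> nat" where
  "stars C = length (filter (\<lambda>x. x = Star) C)"

definition cnt :: "sym \<Rightarrow> sym list \<Rightarrow> nat" where
  "cnt a w = length (filter (\<lambda>x. x = a) w)"

definition dyck :: "sym list set" where
  "dyck = {w. Star \<notin> set w \<and> cnt Zero w = cnt One w \<and>
              (\<forall>k \<le> length w. cnt One (take k w) \<le> cnt Zero (take k w))}"

fun join_stars :: "sym list list \<Rightarrow> sym list" where
  "join_stars [] = []"
| "join_stars [u] = u"
| "join_stars (u # v # us) = u @ [Star] @ join_stars (v # us)"

definition gk_chain :: "nat \<Rightarrow> sym list \<Rightarrow> bool" where
  "gk_chain n C \<longleftrightarrow> length C = n \<and>
     (\<exists>us. us \<noteq> [] \<and> (\<forall>u \<in> set us. u \<in> dyck) \<and> C = join_stars us)"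

fun repl :: "sym list \<Rightarrow> sym list \<Rightarrow> sym list" where
  "repl [] xs = xs"
| "repl (r # rs) [] = []"
| "repl (r # rs) (x # xs) = (if x = Star then r # repl rs xs else x # repl (r # rs) xs)"

definition fC :: "sym list \<Rightarrow> sym list" where
  "fC C = repl [Zero, One] C"

definition lC :: "sym list \<Rightarrow> sym list" where
  "lC C = rev (repl [One, Zero] (rev C))"

definition bottom :: "sym list \<Rightarrow> sym list" where
  "bottom C = map (\<lambda>x. if x = Star then Zero else x) C"

definition ndiff :: "sym list \<Rightarrow> sym list \<Rightarrow> nat" where
  "ndiff x y = card {i. i < length x \<and> x ! i \<noteq> y ! i}"

definition connected_bottom :: "sym list \<Rightarrow> sym list \<Rightarrow> bool" where
  "connected_bottom C D' \<longleftrightarrow> length C = length D' \<and> ndiff (bottom C) (bottom D') = 1"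

end

theory Submission
  imports Defs
begin

lemma repl_nostar: "Star \<notin> set u \<Longrightarrow> repl rs (u @ xs) = u @ repl rs xs"
  by (induction u) (cases rs; auto)+

lemma stars_zero: "stars x = 0 \<longleftrightarrow> Star \<notin> set x"
  unfolding stars_def by (auto simp add: filter_empty_conv)

lemma stars_app[simp]: "stars (x @ y) = stars x + stars y"
  unfolding stars_def by simp

lemma stars_Cons[simp]: "stars (a # y) = (if a = Star then 1 else 0) + stars y"
  unfolding stars_def by simp

lemma lC_form: "Star \<notin> set b \<Longrightarrow> Star \<notin> set c \<Longrightarrow>
   lC (a @ Star # b @ Star # c) = a @ Zero # b @ One # c"
proof -
  assume b: "Star \<notin> set b" and c: "Star \<notin> set c"
  have "repl [One, Zero] (rev c @ Star # rev b @ Star # rev a)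
      = rev c @ One # rev b @ Zero # rev a"
    using b c by (simp add: repl_nostar)
  then show ?thesis unfolding lC_def by simp
qed

lemma decomp2: assumes "stars C' \<ge> 2"
  shows "\<exists>a b c. C' = a @ Star # b @ Star # c \<and> Star \<notin> set b \<and> Star \<notin> set c"
proof -
  have "Star \<in> set C'" using assms stars_zero[of C'] by auto
  then obtain ys c where 1: "C' = ys @ Star # c" "Star \<notin> set c"
    using split_list_last by metis
  then have "stars c = 0" using stars_zero by blast
  then have "stars ys \<ge> 1" using assms 1 by simp
  then have "Star \<in> set ys" using stars_zero[of ys] by auto
  then obtain a b where 2: "ys = a @ Star # b" "Star \<notin> set b"
    using split_list_last by metis
  show ?thesis using 1 2 by auto
qed

lemma key: assumes u: "Star \<notin> set u" and s: "stars C' \<ge> 2"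
  shows "fC ([Star] @ (u @ [Star] @ C') @ [Star]) = [Zero] @ u @ [One] @ C' @ [Star]
        \<and> fC ([Star] @ lC (u @ [Star] @ C') @ [Star]) = [Zero] @ u @ [One] @ lC C' @ [Star]"
proof -
  obtain a b c where d: "C' = a @ Star # b @ Star # c" "Star \<notin> set b" "Star \<notin> set c"
    using decomp2[OF s] by blast
  have l1: "lC (u @ [Star] @ C') = (u @ Star # a) @ Zero # b @ One # c"
    using lC_form[OF d(2,3), of "u @ Star # a"] d(1) by simp
  have l2: "lC C' = a @ Zero # b @ One # c" using lC_form[OF d(2,3)] d(1) by simp
  show ?thesis using u l1 l2 unfolding fC_def by (simp add: repl_nostar)
qed

lemma cardS: "card {i. i < Suc n \<and> Q i} = (if Q 0 then 1 else 0) + card {i. i < n \<and> Q (Suc i)}"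
proof -
  have e: "{i. i < Suc n \<and> Q i} = {i::nat. i = 0 \<and> Q 0} \<union> Suc ` {i. i < n \<and> Q (Suc i)}"
  proof (rule set_eqI)
    fix i show "i \<in> {i. i < Suc n \<and> Q i} \<longleftrightarrow> i \<in> {i::nat. i = 0 \<and> Q 0} \<union> Suc ` {i. i < n \<and> Q (Suc i)}"
      by (cases i) auto
  qed
  have d: "{i::nat. i = 0 \<and> Q 0} \<inter> Suc ` {i. i < n \<and> Q (Suc i)} = {}" by auto
  have "card ({i::nat. i = 0 \<and> Q 0} \<union> Suc ` {i. i < n \<and> Q (Suc i)}) = card {i::nat. i = 0 \<and> Q 0} + card (Suc ` {i. i < n \<and> Q (Suc i)})"
  proof -
    have f1: "finite {i::nat. i = 0 \<and> Q 0}" by simp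
    have f2: "finite (Suc ` {i. i < n \<and> Q (Suc i)})" by simp
    show ?thesis using card_Un_disjoint[OF f1 f2 d] .
  qed
  moreover have "card (Suc ` {i. i < n \<and> Q (Suc i)}) = card {i. i < n \<and> Q (Suc i)}" by (simp add: card_image)
  moreover have "card {i::nat. i = 0 \<and> Q 0} = (if Q 0 then 1 else 0)" by auto
  ultimately show ?thesis using e by simp
qed

lemma ndiff_Cons: assumes "length xs = length ys"
  shows "ndiff (x#xs) (y#ys) = (if x = y then 0 else 1) + ndiff xs ys"
  unfolding ndiff_def by (simp only: length_Cons cardS) simp

lemma ndiff_Nil[simp]: "ndiff [] [] = 0" unfolding ndiff_def by simp

lemma ndiff_append: "length xs = length ys \<Longrightarrow> length zs = length ws \<Longrightarrow>
  ndiff (xs @ zs) (ys @ ws) = ndiff xs ys + ndiff zs ws"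
proof (induction xs arbitrary: ys)
  case Nil then show ?case by simp
next
  case (Cons x xs) then show ?case by (cases ys) (auto simp: ndiff_Cons)
qed

lemma ndiff_same[simp]: "ndiff xs xs = 0" unfolding ndiff_def by simp

lemma nostar_bottom: "Star \<notin> set b \<Longrightarrow> bottom b = b"
  unfolding bottom_def by (induction b) auto

theorem lemma21:
  fixes n :: nat and C :: "sym list"
  assumes "n \<ge> 3" and "gk_chain n C" and "stars C \<ge> 3"
  shows "connected_bottom (fC ([Star] @ C @ [Star])) (fC ([Star] @ lC C @ [Star]))
    \<and> (\<forall>u C'. u \<in> dyck \<and> C = u @ [Star] @ C' \<and> stars C' \<ge> 2 \<longrightarrow>
          fC ([Star] @ C @ [Star]) = [Zero] @ u @ [One] @ C' @ [Star]
        \<and> fC ([Star] @ lC C @ [Star]) = [Zero] @ u @ [One] @ lC C' @ [Star])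
    \<and> length (fC ([Star] @ C @ [Star])) = length (fC ([Star] @ lC C @ [Star]))
    \<and> ndiff (fC ([Star] @ C @ [Star])) (fC ([Star] @ lC C @ [Star])) = 2"
proof -
  have "Star \<in> set C" using assms(3) stars_zero[of C] by auto
  then obtain u C' where uC: "C = u @ Star # C'" "Star \<notin> set u"
    using split_list_first by metis
  have "stars u = 0" using uC(2) stars_zero by blast
  then have s: "stars C' \<ge> 2" using assms(3) uC by simp
  obtain a b c where d: "C' = a @ Star # b @ Star # c" "Star \<notin> set b" "Star \<notin> set c"
    using decomp2[OF s] by blast
  have l2: "lC C' = a @ Zero # b @ One # c" using lC_form[OF d(2,3)] d(1) by simp
  have K: "fC ([Star] @ C @ [Star]) = [Zero] @ u @ [One] @ C' @ [Star]
        \<and> fC ([Star] @ lC C @ [Star]) = [Zero] @ u @ [One] @ lC C' @ [Star]"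
    using key[OF uC(2) s] uC(1) by simp
  have A: "\<forall>u C'. u \<in> dyck \<and> C = u @ [Star] @ C' \<and> stars C' \<ge> 2 \<longrightarrow>
          fC ([Star] @ C @ [Star]) = [Zero] @ u @ [One] @ C' @ [Star]
        \<and> fC ([Star] @ lC C @ [Star]) = [Zero] @ u @ [One] @ lC C' @ [Star]"
  proof (intro allI impI)
    fix u2 C2 assume h: "u2 \<in> dyck \<and> C = u2 @ [Star] @ C2 \<and> 2 \<le> stars C2"
    then have "Star \<notin> set u2" unfolding dyck_def by simp
    then show "fC ([Star] @ C @ [Star]) = [Zero] @ u2 @ [One] @ C2 @ [Star]
        \<and> fC ([Star] @ lC C @ [Star]) = [Zero] @ u2 @ [One] @ lC C2 @ [Star]"
      using key[of u2 C2] h by simp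
  qed
  have e1: "fC ([Star] @ C @ [Star]) = (Zero # u @ One # a) @ [Star] @ b @ [Star] @ c @ [Star]"
    using K d(1) by simp
  have e2: "fC ([Star] @ lC C @ [Star]) = (Zero # u @ One # a) @ [Zero] @ b @ [One] @ c @ [Star]"
    using K l2 by simp
  have N: "ndiff (fC ([Star] @ C @ [Star])) (fC ([Star] @ lC C @ [Star])) = 2"
    unfolding e1 e2 by (simp add: ndiff_append ndiff_Cons)
  have bm: "bottom (x @ y) = bottom x @ bottom y" for x y unfolding bottom_def by simp
  have bs: "bottom [s] = [if s = Star then Zero else s]" for s unfolding bottom_def by simp
  have CB: "connected_bottom (fC ([Star] @ C @ [Star])) (fC ([Star] @ lC C @ [Star]))"
    unfolding connected_bottom_def e1 e2
    by (simp only: bm bs) (simp add: ndiff_append ndiff_Cons bottom_def)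
  have L: "length (fC ([Star] @ C @ [Star])) = length (fC ([Star] @ lC C @ [Star]))"
    unfolding e1 e2 by simp
  show ?thesis using CB A N L by blast
qed

end
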